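(* Let $\mathcal{M}=\langle M,\circ_M,e_M\rangle$ and $\mathcal{N}=\langle N,\circ_N,e_N\rangle$ be mge monoids. Then the Cartesian product $\mathcal{M}\times\mathcal{N}$ (with componentwise operation and unit $\langle e_M,e_N\rangle$) is an mge monoid.
   Context: In a monoid $\langle M,\circ,e\rangle$, a tuple $\langle m_1,\dots,m_n\rangle\in M^n$ is equalizable if there is $\langle x_1,\dots,x_n\rangle\in M^n$ (an equalizer) with $m_1x_1=\dots=m_nx_n$; an equalizer is a most general equalizer (mge) if every equalizer has the form $\langle x_1x,\dots,x_nx\rangle$ for some $x\in M$. An mge monoid is a monoid with right cancellation ($ac=bc\Rightarrow a=b$) in which every equalizable pair has an mge. *)

theory Defs
  imports "HOL-Algebra.Group"
begin

definition equalizer :: "('a, 'b) monoid_scheme \<Rightarrow> 'a \<Rightarrow> 'a \<Rightarrow> 'a \<Rightarrow> 'a \<Rightarrow> bool" where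
  "equalizer M m1 m2 x1 x2 \<longleftrightarrow>
     x1 \<in> carrier M \<and> x2 \<in> carrier M \<and> m1 \<otimes>\<^bsub>M\<^esub> x1 = m2 \<otimes>\<^bsub>M\<^esub> x2"

definition equalizable :: "('a, 'b) monoid_scheme \<Rightarrow> 'a \<Rightarrow> 'a \<Rightarrow> bool" where
  "equalizable M m1 m2 \<longleftrightarrow> (\<exists>x1 x2. equalizer M m1 m2 x1 x2)"

definition mge :: "('a, 'b) monoid_scheme \<Rightarrow> 'a \<Rightarrow> 'a \<Rightarrow> 'a \<Rightarrow> 'a \<Rightarrow> bool" where
  "mge M m1 m2 x1 x2 \<longleftrightarrow>
     equalizer M m1 m2 x1 x2 \<and>
     (\<forall>y1 y2. equalizer M m1 m2 y1 y2 \<longrightarrow>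
        (\<exists>x\<in>carrier M. y1 = x1 \<otimes>\<^bsub>M\<^esub> x \<and> y2 = x2 \<otimes>\<^bsub>M\<^esub> x))"

definition right_cancellative :: "('a, 'b) monoid_scheme \<Rightarrow> bool" where
  "right_cancellative M \<longleftrightarrow>
     (\<forall>a\<in>carrier M. \<forall>b\<in>carrier M. \<forall>c\<in>carrier M.
        a \<otimes>\<^bsub>M\<^esub> c = b \<otimes>\<^bsub>M\<^esub> c \<longrightarrow> a = b)"

definition mge_monoid :: "('a, 'b) monoid_scheme \<Rightarrow> bool" where
  "mge_monoid M \<longleftrightarrow>
     monoid M \<and> right_cancellative M \<and>
     (\<forall>m1\<in>carrier M. \<forall>m2\<in>carrier M.
        equalizable M m1 m2 \<longrightarrow> (\<exists>x1 x2. mge M m1 m2 x1 x2))"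

end

theory Submission
  imports Defs
begin

lemma eqz_prod:
  "equalizer (M \<times>\<times> N) (a1,b1) (a2,b2) (x1,y1) (x2,y2) \<longleftrightarrow>
   equalizer M a1 a2 x1 x2 \<and> equalizer N b1 b2 y1 y2"
  unfolding equalizer_def by auto

theorem lemma1:
  fixes M :: "('a, 'c) monoid_scheme" and N :: "('b, 'd) monoid_scheme"
  assumes "mge_monoid M" and "mge_monoid N"
  shows "mge_monoid (M \<times>\<times> N)"
proof -
  have mM: "monoid M" "right_cancellative M"
    and gM: "\<And>m1 m2. m1 \<in> carrier M \<Longrightarrow> m2 \<in> carrier M \<Longrightarrow> equalizable M m1 m2 \<Longrightarrow> \<exists>x1 x2. mge M m1 m2 x1 x2"
    using assms(1) unfolding mge_monoid_def by auto
  have mN: "monoid N" "right_cancellative N"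
    and gN: "\<And>m1 m2. m1 \<in> carrier N \<Longrightarrow> m2 \<in> carrier N \<Longrightarrow> equalizable N m1 m2 \<Longrightarrow> \<exists>x1 x2. mge N m1 m2 x1 x2"
    using assms(2) unfolding mge_monoid_def by auto
  have "monoid (M \<times>\<times> N)" using mM mN by (rule_tac DirProd_monoid) auto
  moreover have "right_cancellative (M \<times>\<times> N)"
    using mM(2) mN(2) unfolding right_cancellative_def by auto
  moreover have "\<exists>x1 x2. mge (M \<times>\<times> N) m1 m2 x1 x2"
    if m1: "m1 \<in> carrier (M \<times>\<times> N)" and m2: "m2 \<in> carrier (M \<times>\<times> N)"
      and e: "equalizable (M \<times>\<times> N) m1 m2" for m1 m2
  proof -
    obtain a1 b1 a2 b2 where p: "m1 = (a1,b1)" "m2 = (a2,b2)" by fastforce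
    from e obtain z1 z2 where z: "equalizer (M \<times>\<times> N) m1 m2 z1 z2"
      unfolding equalizable_def by blast
    obtain x1 y1 x2 y2 where zz: "z1 = (x1,y1)" "z2 = (x2,y2)" by fastforce
    from z have "equalizer M a1 a2 x1 x2" "equalizer N b1 b2 y1 y2"
      using eqz_prod p zz by metis+
    then have "equalizable M a1 a2" "equalizable N b1 b2"
      unfolding equalizable_def by blast+
    moreover have "a1 \<in> carrier M" "a2 \<in> carrier M" "b1 \<in> carrier N" "b2 \<in> carrier N"
      using m1 m2 p by auto
    ultimately obtain u1 u2 v1 v2 where u: "mge M a1 a2 u1 u2" and v: "mge N b1 b2 v1 v2"
      using gM gN by meson
    have "mge (M \<times>\<times> N) m1 m2 (u1,v1) (u2,v2)"
      unfolding mge_def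
    proof (intro conjI allI impI)
      show "equalizer (M \<times>\<times> N) m1 m2 (u1, v1) (u2, v2)"
        using u v p eqz_prod unfolding mge_def by metis
    next
      fix w1 w2 assume w: "equalizer (M \<times>\<times> N) m1 m2 w1 w2"
      obtain c1 d1 c2 d2 where ww: "w1 = (c1,d1)" "w2 = (c2,d2)" by fastforce
      from w have "equalizer M a1 a2 c1 c2" "equalizer N b1 b2 d1 d2"
        using eqz_prod p ww by metis+
      then obtain s t where "s \<in> carrier M" "c1 = u1 \<otimes>\<^bsub>M\<^esub> s" "c2 = u2 \<otimes>\<^bsub>M\<^esub> s"
        "t \<in> carrier N" "d1 = v1 \<otimes>\<^bsub>N\<^esub> t" "d2 = v2 \<otimes>\<^bsub>N\<^esub> t"
        using u v unfolding mge_def by meson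
      then show "\<exists>x\<in>carrier (M \<times>\<times> N). w1 = (u1, v1) \<otimes>\<^bsub>M \<times>\<times> N\<^esub> x \<and> w2 = (u2, v2) \<otimes>\<^bsub>M \<times>\<times> N\<^esub> x"
        using ww by (intro bexI[of _ "(s,t)"]) auto
    qed
    then show ?thesis by blast
  qed
  ultimately show ?thesis unfolding mge_monoid_def by blast
qed

end
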